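(* Let $t\in(0,\infty)\cap\mathbb Q$ be a reduced fraction. (1) If $0<t<1$, then each subword of $\omega_t$ lying between two consecutive occurrences of $z^{\pm1}$ is either of the form $y^{\pm1}$ or of the form $y^{\pm1}x^{\pm1}y^{\pm1}$. (2) If $1<t<\infty$, then each subword of $\omega_t$ lying between two consecutive occurrences of $x^{\pm1}$ is either of the form $y^{\pm1}$ or of the form $y^{\pm1}z^{\pm1}y^{\pm1}$.
   Context: Modified lattice: the planar graph with vertex set $\mathbb Z^2$ whose edges are the horizontal unit segments, the vertical unit segments, and the diagonal segments of slope $-1$ joining $(i,j+1)$ and $(i+1,j)$. Words $\omega_t$: for reduced $t=p/q\in(0,\infty)$, let $L_t$ be the segment from $(0,0)$ to $(q,p)$, oriented from $(0,0)$ to $(q,p)$. List the edges whose relative interior meets $L_t$, in the order of the intersection points along $L_t$. A horizontal (resp. diagonal, vertical) edge contributes $x$ (resp. $y$, $z$) if its midpoint is not on the right-hand side of $L_t$ (including lying on $L_t$), and $x^{-1}$ (resp. $y^{-1}$, $z^{-1}$) if its midpoint is on the right-hand side. $\omega_t$ is the concatenation of these letters. The notation $y^{\pm1}x^{\pm1}y^{\pm1}$ means a word of three letters with these generators and arbitrary exponents $\pm1$. *)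

theory Defs
  imports Complex_Main
begin

text \<open>Edges of the modified lattice on Z^2:
  H i j : horizontal edge from (i,j) to (i+1,j)
  V i j : vertical edge from (i,j) to (i,j+1)
  D i j : diagonal edge (slope -1) from (i,j+1) to (i+1,j).\<close>
datatype edge = H int int | V int int | D int int

text \<open>Generators: X (horizontal), Y (diagonal), Z (vertical).
  A letter is a generator with a sign; True means exponent +1, False exponent -1.\<close>
datatype gen = X | Y | Z

type_synonym letter = "gen \<times> bool"

text \<open>Points of L_t (t = p/q) are s * (q,p) for s in [0,1].  For an edge not
  parallel to L_t, the (unique) parameter s at which the line of L_t meets
  the line of the edge.\<close>
fun edge_param :: "nat \<Rightarrow> nat \<Rightarrow> edge \<Rightarrow> real" where
  "edge_param p q (H i j) = real_of_int j / real p"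
| "edge_param p q (V i j) = real_of_int i / real q"
| "edge_param p q (D i j) = real_of_int (i + j + 1) / real (p + q)"

fun edge_meets :: "nat \<Rightarrow> nat \<Rightarrow> edge \<Rightarrow> bool" where
  "edge_meets p q (H i j) = (let s = real_of_int j / real p in
       0 \<le> s \<and> s \<le> 1 \<and> real_of_int i < s * real q \<and> s * real q < real_of_int i + 1)"
| "edge_meets p q (V i j) = (let s = real_of_int i / real q in
       0 \<le> s \<and> s \<le> 1 \<and> real_of_int j < s * real p \<and> s * real p < real_of_int j + 1)"
| "edge_meets p q (D i j) = (let s = real_of_int (i + j + 1) / real (p + q) in
       0 \<le> s \<and> s \<le> 1 \<and> real_of_int i < s * real q \<and> s * real q < real_of_int i + 1)"

fun midpoint_e :: "edge \<Rightarrow> real \<times> real" where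
  "midpoint_e (H i j) = (real_of_int i + 1/2, real_of_int j)"
| "midpoint_e (V i j) = (real_of_int i, real_of_int j + 1/2)"
| "midpoint_e (D i j) = (real_of_int i + 1/2, real_of_int j + 1/2)"

definition right_side :: "nat \<Rightarrow> nat \<Rightarrow> real \<times> real \<Rightarrow> bool" where
  "right_side p q m = (real q * snd m - real p * fst m < 0)"

fun edge_gen :: "edge \<Rightarrow> gen" where
  "edge_gen (H i j) = X"
| "edge_gen (D i j) = Y"
| "edge_gen (V i j) = Z"

definition edge_letter :: "nat \<Rightarrow> nat \<Rightarrow> edge \<Rightarrow> letter" where
  "edge_letter p q e = (edge_gen e, \<not> right_side p q (midpoint_e e))"

definition crossing_edges :: "nat \<Rightarrow> nat \<Rightarrow> edge list" where
  "crossing_edges p q = (THE es. distinct es \<and> set es = {e. edge_meets p q e}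
                                \<and> sorted (map (edge_param p q) es))"

definition omega :: "nat \<Rightarrow> nat \<Rightarrow> letter list" where
  "omega p q = map (edge_letter p q) (crossing_edges p q)"

definition between :: "'a list \<Rightarrow> nat \<Rightarrow> nat \<Rightarrow> 'a list" where
  "between w a b = take (b - a - 1) (drop (a + 1) w)"

end

theory Submission
  imports Defs
begin

fun key :: "nat \<Rightarrow> nat \<Rightarrow> edge \<Rightarrow> int" where
  "key p q (H i j) = j * int q * (int p + int q)"
| "key p q (V i j) = i * int p * (int p + int q)"
| "key p q (D i j) = (i+j+1) * int p * int q"

lemma param_key: assumes "0<p" "0<q"
  shows "edge_param p q e = real_of_int (key p q e) / (real p * real q * (real p + real q))"
proof -
  have nz: "real q * (real p + real q) \<noteq> 0" "real p * (real p + real q) \<noteq> 0" "real p * real q \<noteq> 0"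
    using assms by auto
  show ?thesis
  proof (cases e)
    case (H i j)
    have "real_of_int j / real p = (real_of_int j * (real q * (real p + real q))) / (real p * (real q * (real p + real q)))"
      using nz by simp
    then show ?thesis using H by (simp add: ac_simps)
  next
    case (V i j)
    have "real_of_int i / real q = (real_of_int i * (real p * (real p + real q))) / (real q * (real p * (real p + real q)))"
      using nz by simp
    then show ?thesis using V by (simp add: ac_simps)
  next
    case (D i j)
    have "real_of_int (i+j+1) / (real p + real q) = (real_of_int (i+j+1) * (real p * real q)) / ((real p + real q) * (real p * real q))"
      using nz by simp
    then show ?thesis using D by (simp add: ac_simps)
  qed
qed

lemma param_le: assumes "0<p" "0<q"
  shows "edge_param p q e \<le> edge_param p q e' \<longleftrightarrow> key p q e \<le> key p q e'"
proof -
  have "0 < real p * real q * (real p + real q)" using assms by simp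
  then show ?thesis unfolding param_key[OF assms] by (simp add: divide_le_cancel)
qed

lemma fr1: "0 < (d::real) \<Longrightarrow> (a < x/d*c) = (a*d < x*c)"
  by (simp add: field_simps)
lemma fr2: "0 < (d::real) \<Longrightarrow> (x/d*c < b) = (x*c < b*d)"
  by (simp add: field_simps)
lemma fr3: "0 < (d::real) \<Longrightarrow> (x/d \<le> 1) = (x \<le> d)"
  by (simp add: field_simps)
lemma fr4: "0 < (d::real) \<Longrightarrow> (0 \<le> x/d) = (0 \<le> x)"
  by (simp add: field_simps)

lemma rpq: "real p = real_of_int (int p)" "real q = real_of_int (int q)" by simp_all

lemma meets_H: assumes "0<p" "0<q"
  shows "edge_meets p q (H i j) \<longleftrightarrow> 0 \<le> j \<and> j \<le> int p \<and> i * int p < j * int q \<and> j * int q < (i+1) * int p"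
proof -
  have d: "0 < real_of_int (int p)" using assms by simp
  have "edge_meets p q (H i j) \<longleftrightarrow> (0 \<le> real_of_int j \<and> real_of_int j \<le> real_of_int (int p) \<and>
     real_of_int (i * int p) < real_of_int (j * int q) \<and> real_of_int (j * int q) < real_of_int ((i+1) * int p))"
    unfolding edge_meets.simps Let_def rpq fr1[OF d] fr2[OF d] fr3[OF d] fr4[OF d] of_int_mult
    by simp
  then show ?thesis by (simp only: of_int_less_iff of_int_le_iff of_int_0_le_iff)
qed

lemma meets_V: assumes "0<p" "0<q"
  shows "edge_meets p q (V i j) \<longleftrightarrow> 0 \<le> i \<and> i \<le> int q \<and> j * int q < i * int p \<and> i * int p < (j+1) * int q"
proof -
  have d: "0 < real_of_int (int q)" using assms by simp
  have "edge_meets p q (V i j) \<longleftrightarrow> (0 \<le> real_of_int i \<and> real_of_int i \<le> real_of_int (int q) \<and>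
     real_of_int (j * int q) < real_of_int (i * int p) \<and> real_of_int (i * int p) < real_of_int ((j+1) * int q))"
    unfolding edge_meets.simps Let_def rpq fr1[OF d] fr2[OF d] fr3[OF d] fr4[OF d] of_int_mult
    by simp
  then show ?thesis by (simp only: of_int_less_iff of_int_le_iff of_int_0_le_iff)
qed

lemma meets_D: assumes "0<p" "0<q"
  shows "edge_meets p q (D i j) \<longleftrightarrow> 0 \<le> i+j+1 \<and> i+j+1 \<le> int p + int q \<and> i * int p < (j+1) * int q \<and> j * int q < (i+1) * int p"
proof -
  have d: "0 < real_of_int (int p + int q)" using assms by simp
  have rp: "real p + real q = real_of_int (int p + int q)" by simp
  have "edge_meets p q (D i j) \<longleftrightarrow> (0 \<le> real_of_int (i+j+1) \<and> real_of_int (i+j+1) \<le> real_of_int (int p + int q) \<and>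
     real_of_int (i * (int p + int q)) < real_of_int ((i+j+1) * int q) \<and> real_of_int ((i+j+1) * int q) < real_of_int ((i+1) * (int p + int q)))"
    unfolding edge_meets.simps Let_def of_nat_add rp fr1[OF d] fr2[OF d] fr3[OF d] fr4[OF d] 
    by simp
  also have "\<dots> \<longleftrightarrow> 0 \<le> i+j+1 \<and> i+j+1 \<le> int p + int q \<and> i * (int p + int q) < (i+j+1) * int q \<and> (i+j+1) * int q < (i+1) * (int p + int q)"
    by (simp only: of_int_less_iff of_int_le_iff of_int_0_le_iff)
  also have "\<dots> \<longleftrightarrow> 0 \<le> i+j+1 \<and> i+j+1 \<le> int p + int q \<and> i * int p < (j+1) * int q \<and> j * int q < (i+1) * int p"
    by (simp add: algebra_simps)
  finally show ?thesis .
qed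

lemma cancel_lt: "(a::int) * c < b * c \<Longrightarrow> 0 < c \<Longrightarrow> a < b"
  using mult_right_less_imp_less by fastforce

lemma between_len: "a < b \<Longrightarrow> b < length w \<Longrightarrow> length (between w a b) = b - a - 1"
  unfolding between_def by simp

lemma between_nth: "a < b \<Longrightarrow> b < length w \<Longrightarrow> m < b - a - 1 \<Longrightarrow> between w a b ! m = w ! (a + 1 + m)"
  unfolding between_def by simp

lemma between_set: "a < b \<Longrightarrow> b < length w \<Longrightarrow> set (between w a b) = {w ! k | k. a < k \<and> k < b}"
proof -
  assume ab: "a < b" "b < length w"
  show ?thesis
  proof (rule set_eqI)
    fix x
    show "x \<in> set (between w a b) \<longleftrightarrow> x \<in> {w ! k | k. a < k \<and> k < b}"
    proof
      assume "x \<in> set (between w a b)"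
      then obtain m where m: "m < length (between w a b)" "x = between w a b ! m" by (metis in_set_conv_nth)
      then have "m < b - a - 1" using between_len[OF ab] by simp
      then have "x = w ! (a + 1 + m)" "a < a + 1 + m" "a + 1 + m < b" using m between_nth[OF ab] by auto
      then show "x \<in> {w ! k | k. a < k \<and> k < b}" by blast
    next
      assume "x \<in> {w ! k | k. a < k \<and> k < b}"
      then obtain k where k: "a < k" "k < b" "x = w ! k" by auto
      then have "between w a b ! (k - a - 1) = x" using ab between_nth[of a b w "k - a - 1"] by simp
      moreover have "k - a - 1 < length (between w a b)" using k between_len[OF ab] by simp
      ultimately show "x \<in> set (between w a b)" by (metis nth_mem)
    qed
  qed
qed

lemma between_sorted: "sorted_wrt R w \<Longrightarrow> sorted_wrt R (between w a b)"
  unfolding between_def by (simp add: sorted_wrt_take sorted_wrt_drop)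

lemma between_key_set:
  assumes s: "sorted_wrt (\<lambda>e e'. (f e :: int) < f e') w" and ab: "a < b" "b < length w"
  shows "set (between w a b) = {e \<in> set w. f (w ! a) < f e \<and> f e < f (w ! b)}"
proof -
  have lt: "f (w ! k) < f (w ! l)" if "k < l" "l < length w" for k l
    using s that by (simp add: sorted_wrt_iff_nth_less)
  show ?thesis unfolding between_set[OF ab]
  proof (rule set_eqI, rule iffI)
    fix x assume "x \<in> {w ! k | k. a < k \<and> k < b}"
    then obtain k where k: "a < k" "k < b" "x = w ! k" by auto
    then show "x \<in> {e \<in> set w. f (w ! a) < f e \<and> f e < f (w ! b)}" using lt ab by auto
  next
    fix x assume "x \<in> {e \<in> set w. f (w ! a) < f e \<and> f e < f (w ! b)}"
    then obtain k where k: "k < length w" "x = w ! k" "f (w ! a) < f x" "f x < f (w ! b)"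
      by (auto simp: in_set_conv_nth)
    have "a < k"
    proof (rule ccontr)
      assume "\<not> a < k"
      then have "k = a \<or> k < a" by auto
      then show False using lt[of k a] k ab by auto
    qed
    moreover have "k < b"
    proof (rule ccontr)
      assume "\<not> k < b"
      then have "k = b \<or> b < k" by auto
      then show False using lt[of b k] k ab by auto
    qed
    ultimately show "x \<in> {w ! k | k. a < k \<and> k < b}" using k by auto
  qed
qed

lemma sorted_unique:
  assumes "sorted_wrt (\<lambda>e e'. (f e :: int) < f e') xs" "sorted_wrt (\<lambda>e e'. f e < f e') ys"
    "set xs = set ys" "inj_on f (set xs)"
  shows "xs = ys"
proof -
  have "sorted_wrt (<) (map f xs)" "sorted_wrt (<) (map f ys)" using assms by (simp_all add: sorted_wrt_map)
  then have "map f xs = map f ys" using assms(3)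
    by (intro sorted_distinct_set_unique) (auto simp: strict_sorted_iff)
  then show ?thesis using assms(3,4) inj_on_map_eq_map[of f xs ys] by simp
qed

context
  fixes p q :: nat
  assumes p0: "0 < p" and q0: "0 < q" and cop: "coprime p q"
begin

lemma pp: "0 < int p" using p0 by simp
lemma qq: "0 < int q" using q0 by simp
lemma ppq: "0 < int p + int q" using p0 by simp
lemma copI: "coprime (int p) (int q)" using cop by simp

lemma ndvdP: "0 < j \<Longrightarrow> j < int p \<Longrightarrow> j * int q \<noteq> k * int p"
proof
  assume a: "0 < j" "j < int p" "j * int q = k * int p"
  then have "int p dvd j * int q" by (metis dvd_triv_right)
  then have "int p dvd j" using copI by (simp add: coprime_dvd_mult_left_iff)
  then show False using a zdvd_imp_le by fastforce
qed

lemma ndvdQ: "0 < i \<Longrightarrow> i < int q \<Longrightarrow> i * int p \<noteq> k * int q"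
proof
  assume a: "0 < i" "i < int q" "i * int p = k * int q"
  then have "int q dvd i * int p" by (metis dvd_triv_right)
  then have "int q dvd i" using copI coprime_commute by (metis coprime_dvd_mult_left_iff)
  then show False using a zdvd_imp_le by fastforce
qed

lemma mH: assumes "edge_meets p q (H i j)" shows "0 < j \<and> j < int p"
proof -
  have m: "0 \<le> j" "j \<le> int p" "i * int p < j * int q" "j * int q < (i+1) * int p"
    using assms meets_H[OF p0 q0] by auto
  have "j \<noteq> 0"
  proof
    assume "j = 0"
    then have "i * int p < 0 * int p" "0 * int p < (i+1) * int p" using m by auto
    then have "i < 0" "0 < i + 1" using cancel_lt[OF _ pp] by blast+
    then show False by simp
  qed
  moreover have "j \<noteq> int p"
  proof
    assume "j = int p"
    then have "i * int p < int q * int p" "int q * int p < (i+1) * int p" using m by (auto simp: ac_simps)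
    then have "i < int q" "int q < i + 1" using cancel_lt[OF _ pp] by blast+
    then show False by simp
  qed
  ultimately show ?thesis using m by auto
qed

lemma mV: assumes "edge_meets p q (V i j)" shows "0 < i \<and> i < int q"
proof -
  have m: "0 \<le> i" "i \<le> int q" "j * int q < i * int p" "i * int p < (j+1) * int q"
    using assms meets_V[OF p0 q0] by auto
  have "i \<noteq> 0"
  proof
    assume "i = 0"
    then have "j * int q < 0 * int q" "0 * int q < (j+1) * int q" using m by auto
    then have "j < 0" "0 < j + 1" using cancel_lt[OF _ qq] by blast+
    then show False by simp
  qed
  moreover have "i \<noteq> int q"
  proof
    assume "i = int q"
    then have "j * int q < int p * int q" "int p * int q < (j+1) * int q" using m by (auto simp: ac_simps)
    then have "j < int p" "int p < j + 1" using cancel_lt[OF _ qq] by blast+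
    then show False by simp
  qed
  ultimately show ?thesis using m by auto
qed

lemma mD: assumes "edge_meets p q (D i j)" shows "0 < i+j+1 \<and> i+j+1 < int p + int q"
proof -
  have m: "0 \<le> i+j+1" "i+j+1 \<le> int p + int q" "i * int p < (j+1) * int q" "j * int q < (i+1) * int p"
    using assms meets_D[OF p0 q0] by auto
  have "i+j+1 \<noteq> 0"
  proof
    assume "i+j+1 = 0"
    then have jj: "j = - i - 1" by simp
    have "i * int p < (-i) * int q" "(-i - 1) * int q < (i+1) * int p" using m unfolding jj by (simp_all add: algebra_simps)
    then have "i * int p + i * int q < 0" "0 < (i+1) * int p + (i+1) * int q" by (auto simp: algebra_simps)
    then have "i * (int p + int q) < 0 * (int p + int q)" "0 * (int p + int q) < (i+1) * (int p + int q)"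
      by (auto simp: algebra_simps)
    then have "i < 0" "0 < i+1" using cancel_lt[OF _ ppq] by blast+
    then show False by simp
  qed
  moreover have "i+j+1 \<noteq> int p + int q"
  proof
    assume "i+j+1 = int p + int q"
    then have jj: "j = int p + int q - i - 1" by simp
    have "i * int p < (int p + int q - i) * int q" "(int p + int q - i - 1) * int q < (i+1) * int p" using m unfolding jj by (simp_all add: algebra_simps)
    then have "i * (int p + int q) < int q * (int p + int q)" "int q * (int p + int q) < (i+1) * (int p + int q)"
      by (auto simp: algebra_simps)
    then have "i < int q" "int q < i+1" using cancel_lt[OF _ ppq] by blast+
    then show False by simp
  qed
  ultimately show ?thesis using m by auto
qed


lemma exH: assumes "0 < j" "j < int p" shows "\<exists>i. edge_meets p q (H i j)"
proof -
  define i where "i = (j * int q) div int p"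
  define r where "r = (j * int q) mod int p"
  have e: "j * int q = i * int p + r" unfolding i_def r_def by simp
  have r: "0 \<le> r" "r < int p" unfolding r_def using pp by auto
  have "r \<noteq> 0" using ndvdP[OF assms, of i] e by auto
  then have "i * int p < j * int q" "j * int q < (i+1) * int p" using e r by (auto simp: algebra_simps)
  then have "edge_meets p q (H i j)" unfolding meets_H[OF p0 q0] using assms by simp
  then show ?thesis by blast
qed

lemma exV: assumes "0 < i" "i < int q" shows "\<exists>j. edge_meets p q (V i j)"
proof -
  define j where "j = (i * int p) div int q"
  define r where "r = (i * int p) mod int q"
  have e: "i * int p = j * int q + r" unfolding j_def r_def by simp
  have r: "0 \<le> r" "r < int q" unfolding r_def using qq by auto
  have "r \<noteq> 0" using ndvdQ[OF assms, of j] e by auto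
  then have "j * int q < i * int p" "i * int p < (j+1) * int q" using e r by (auto simp: algebra_simps)
  then have "edge_meets p q (V i j)" unfolding meets_V[OF p0 q0] using assms by simp
  then show ?thesis by blast
qed

lemma exD: assumes "0 < n" "n < int p + int q" shows "\<exists>i j. i + j + 1 = n \<and> edge_meets p q (D i j)"
proof -
  define i where "i = (n * int q) div (int p + int q)"
  define r where "r = (n * int q) mod (int p + int q)"
  have e: "n * int q = i * (int p + int q) + r" unfolding i_def r_def using div_mult_mod_eq[of "n * int q" "int p + int q"] by simp
  have r: "0 \<le> r" "r < int p + int q" unfolding r_def using ppq by auto
  have i0: "0 \<le> i" unfolding i_def using assms qq ppq by (simp add: pos_imp_zdiv_nonneg_iff)
  have "r \<noteq> 0"
  proof
    assume "r = 0"
    then have e2: "n * int q = i * (int p + int q)" using e by simp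
    show False
    proof (cases "i = 0")
      case True then show False using e2 assms qq by simp
    next
      case False
      show False
      proof (cases "i < int q")
        case True
        have "i * int p = (n - i) * int q" using e2 by (simp add: algebra_simps)
        then show False using ndvdQ[of i "n - i"] True False i0 by simp
      next
        case False
        then have "int q * (int p + int q) \<le> i * (int p + int q)" using ppq by (simp add: mult_right_mono)
        also have "\<dots> = n * int q" using e2 by simp
        also have "\<dots> < (int p + int q) * int q" using assms qq by simp
        finally show False by (simp add: ac_simps)
      qed
    qed
  qed
  then have a1: "i * (int p + int q) < n * int q" "n * int q < (i+1) * (int p + int q)" using e r by (auto simp: algebra_simps)
  define j where "j = n - 1 - i"
  have "i * int p < (j+1) * int q" "j * int q < (i+1) * int p" using a1 unfolding j_def by (auto simp: algebra_simps)
  moreover have "i + j + 1 = n" unfolding j_def by simp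
  ultimately show ?thesis using assms meets_D[OF p0 q0] by (metis less_imp_le)
qed

lemma key_inj: assumes "edge_meets p q e" "edge_meets p q e'" "key p q e = key p q e'" shows "e = e'"
proof (cases e)
  case (H i j)
  note hm = mH[OF assms(1)[unfolded H]]
  note hc = assms(1)[unfolded H meets_H[OF p0 q0]]
  show ?thesis
  proof (cases e')
    case (H i' j')
    note hc' = assms(2)[unfolded H meets_H[OF p0 q0]]
    have "j = j'" using assms(3) \<open>e = H i j\<close> H ppq qq by simp
    then have "i * int p < (i'+1) * int p" "i' * int p < (i+1) * int p" using hc hc' by auto
    then have "i < i' + 1" "i' < i + 1" using cancel_lt[OF _ pp] by blast+
    then show ?thesis using \<open>e = H i j\<close> H \<open>j = j'\<close> by simp
  next
    case (V i' j')
    have "j * int q * (int p + int q) = i' * int p * (int p + int q)" using assms(3) \<open>e = H i j\<close> V by simp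
    then have "j * int q = i' * int p" using ppq by simp
    then show ?thesis using ndvdP hm by blast
  next
    case (D i' j')
    have "j * int q * (int p + int q) = (i'+j'+1) * int p * int q" using assms(3) \<open>e = H i j\<close> D by simp
    then have "(j * (int p + int q)) * int q = ((i'+j'+1) * int p) * int q" by (simp add: ac_simps)
    then have "j * (int p + int q) = (i'+j'+1) * int p" using qq by simp
    then have "j * int q = (i'+j'+1 - j) * int p" by (simp add: algebra_simps)
    then show ?thesis using ndvdP hm by blast
  qed
next
  case (V i j)
  note vm = mV[OF assms(1)[unfolded V]]
  note vc = assms(1)[unfolded V meets_V[OF p0 q0]]
  show ?thesis
  proof (cases e')
    case (V i' j')
    note vc' = assms(2)[unfolded V meets_V[OF p0 q0]]
    have "i = i'" using assms(3) \<open>e = V i j\<close> V ppq pp by simp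
    then have "j * int q < (j'+1) * int q" "j' * int q < (j+1) * int q" using vc vc' by auto
    then have "j < j' + 1" "j' < j + 1" using cancel_lt[OF _ qq] by blast+
    then show ?thesis using \<open>e = V i j\<close> V \<open>i = i'\<close> by simp
  next
    case (H i' j')
    have "i * int p * (int p + int q) = j' * int q * (int p + int q)" using assms(3) \<open>e = V i j\<close> H by simp
    then have "i * int p = j' * int q" using ppq by simp
    then show ?thesis using ndvdQ vm by blast
  next
    case (D i' j')
    have "i * int p * (int p + int q) = (i'+j'+1) * int p * int q" using assms(3) \<open>e = V i j\<close> D by simp
    then have "(i * (int p + int q)) * int p = ((i'+j'+1) * int q) * int p" by (simp add: ac_simps)
    then have "i * (int p + int q) = (i'+j'+1) * int q" using pp by simp
    then have "i * int p = (i'+j'+1 - i) * int q" by (simp add: algebra_simps)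
    then show ?thesis using ndvdQ vm by blast
  qed
next
  case (D i j)
  note dc = assms(1)[unfolded D meets_D[OF p0 q0]]
  show ?thesis
  proof (cases e')
    case (D i' j')
    note dc' = assms(2)[unfolded D meets_D[OF p0 q0]]
    have n: "i + j + 1 = i' + j' + 1" using assms(3) \<open>e = D i j\<close> D pp qq by simp
    have "\<not> i < i'" if "i + j + 1 = i' + j' + 1" "i * int p < (j+1) * int q" "j * int q < (i+1) * int p"
      "i' * int p < (j'+1) * int q" "j' * int q < (i'+1) * int p" for i j i' j'
    proof
      assume "i < i'"
      then have "j' + 1 \<le> j" "i + 1 \<le> i'" using that by auto
      then have "(j'+1) * int q \<le> j * int q" "(i+1) * int p \<le> i' * int p" using pp qq by (auto intro: mult_right_mono)
      then show False using that by linarith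
    qed
    then have "i = i'" using n dc dc' by (metis linorder_neqE_linordered_idom)
    then show ?thesis using n \<open>e = D i j\<close> D by simp
  next
    case (H i' j')
    note hm = mH[OF assms(2)[unfolded H]]
    have "(i+j+1) * int p * int q = j' * int q * (int p + int q)" using assms(3) \<open>e = D i j\<close> H by simp
    then have "((i+j+1) * int p) * int q = (j' * (int p + int q)) * int q" by (simp add: ac_simps)
    then have "(i+j+1) * int p = j' * (int p + int q)" using qq by simp
    then have "j' * (int p + int q) = (i+j+1) * int p" by simp
    then have "j' * int q = (i+j+1 - j') * int p" by (simp add: algebra_simps)
    then show ?thesis using ndvdP hm by blast
  next
    case (V i' j')
    note vm = mV[OF assms(2)[unfolded V]]
    have "(i+j+1) * int p * int q = i' * int p * (int p + int q)" using assms(3) \<open>e = D i j\<close> V by simp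
    then have "((i+j+1) * int q) * int p = (i' * (int p + int q)) * int p" by (simp add: ac_simps)
    then have "(i+j+1) * int q = i' * (int p + int q)" using pp by simp
    then have "i' * (int p + int q) = (i+j+1) * int q" by simp
    then have "i' * int p = (i+j+1 - i') * int q" by (simp add: algebra_simps)
    then show ?thesis using ndvdQ vm by blast
  qed
qed


abbreviation "MM \<equiv> {e. edge_meets p q e}"

lemma injM: "inj_on (key p q) MM"
  by (rule inj_onI) (use key_inj in auto)

lemma key_bounds: assumes "edge_meets p q e"
  shows "0 \<le> key p q e \<and> key p q e \<le> int p * int q * (int p + int q)"
proof (cases e)
  case (H i j)
  then have "0 < j" "j < int p" using mH assms by auto
  then have "j * int q * (int p + int q) \<le> int p * int q * (int p + int q)"
    using qq ppq by (intro mult_right_mono) auto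
  then show ?thesis using H \<open>0 < j\<close> qq ppq by simp
next
  case (V i j)
  then have "0 < i" "i < int q" using mV assms by auto
  then have "i * int p * (int p + int q) \<le> int q * int p * (int p + int q)"
    using pp ppq by (intro mult_right_mono) auto
  then show ?thesis using V \<open>0 < i\<close> pp ppq by (simp add: ac_simps)
next
  case (D i j)
  then have "0 < i+j+1" "i+j+1 < int p + int q" using mD assms by auto
  then have "(i+j+1) * (int p * int q) \<le> (int p + int q) * (int p * int q)"
    using pp qq by (intro mult_right_mono) auto
  then show ?thesis using D \<open>0 < i+j+1\<close> pp qq by (simp add: ac_simps)
qed

lemma finM: "finite MM"
proof (rule finite_imageD[OF _ injM])
  show "finite (key p q ` MM)"
    by (rule finite_subset[of _ "{0..int p * int q * (int p + int q)}"]) (use key_bounds in auto)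
qed

definition LL where "LL = sorted_list_of_set (key p q ` MM)"

lemma Pr_iff: "(distinct es \<and> set es = MM \<and> sorted (map (edge_param p q) es)) \<longleftrightarrow> (set es = MM \<and> map (key p q) es = LL)"
proof
  assume a: "distinct es \<and> set es = MM \<and> sorted (map (edge_param p q) es)"
  have "sorted (map (key p q) es)" using a by (simp add: sorted_map param_le[OF p0 q0])
  moreover have "distinct (map (key p q) es)" using a injM by (simp add: distinct_map)
  moreover have "set (map (key p q) es) = set LL" unfolding LL_def using a finM by simp
  ultimately have "map (key p q) es = LL" unfolding LL_def
    by (intro sorted_distinct_set_unique) (auto simp: LL_def)
  then show "set es = MM \<and> map (key p q) es = LL" using a by simp
next
  assume a: "set es = MM \<and> map (key p q) es = LL"
  have "distinct (map (key p q) es)" using a unfolding LL_def by simp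
  then have "distinct es" by (simp add: distinct_map)
  moreover have "sorted (map (key p q) es)" using a unfolding LL_def by simp
  then have "sorted (map (edge_param p q) es)" by (simp add: sorted_map param_le[OF p0 q0])
  ultimately show "distinct es \<and> set es = MM \<and> sorted (map (edge_param p q) es)" using a by simp
qed

lemma ce_props: "set (crossing_edges p q) = MM \<and> map (key p q) (crossing_edges p q) = LL"
proof -
  define es0 where "es0 = map (the_inv_into MM (key p q)) LL"
  have sL: "set LL = key p q ` MM" unfolding LL_def using finM by simp
  have m0: "map (key p q) es0 = LL" unfolding es0_def
  proof -
    have "\<forall>y\<in>set LL. key p q (the_inv_into MM (key p q) y) = y" using sL injM f_the_inv_into_f by metis
    then show "map (key p q) (map (the_inv_into MM (key p q)) LL) = LL" unfolding map_map by (auto intro!: map_idI)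
  qed
  have s0: "set es0 = MM" unfolding es0_def set_map sL using injM by (simp add: the_inv_into_onto)
  have ex: "\<exists>!es. distinct es \<and> set es = MM \<and> sorted (map (edge_param p q) es)"
  proof (rule ex1I)
    show "distinct es0 \<and> set es0 = MM \<and> sorted (map (edge_param p q) es0)" using Pr_iff m0 s0 by blast
  next
    fix es assume "distinct es \<and> set es = MM \<and> sorted (map (edge_param p q) es)"
    then have "set es = MM" "map (key p q) es = map (key p q) es0" using Pr_iff m0 by auto
    then show "es = es0" using injM s0 inj_on_map_eq_map[of "key p q" es es0] by auto
  qed
  have "distinct (crossing_edges p q) \<and> set (crossing_edges p q) = MM \<and> sorted (map (edge_param p q) (crossing_edges p q))"
    unfolding crossing_edges_def by (rule theI'[OF ex])
  then show ?thesis using Pr_iff by blast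
qed

lemma ce_sorted: "sorted_wrt (\<lambda>e e'. key p q e < key p q e') (crossing_edges p q)"
proof -
  have "sorted_wrt (<) LL" unfolding LL_def strict_sorted_iff by simp
  then show ?thesis using ce_props by (metis sorted_wrt_map)
qed


lemma kVV: "i * int p * (int p + int q) < i2 * int p * (int p + int q) \<longleftrightarrow> i < i2"
proof -
  have "0 < int p * (int p + int q)" using pp ppq by simp
  then show ?thesis using mult_less_cancel_right[of i "int p * (int p + int q)" i2] by (simp add: mult.assoc)
qed
lemma kVH: "i * int p * (int p + int q) < j * int q * (int p + int q) \<longleftrightarrow> i * int p < j * int q"
  using ppq by simp
lemma kHV: "j * int q * (int p + int q) < i * int p * (int p + int q) \<longleftrightarrow> j * int q < i * int p"
  using ppq by simp
lemma kVD: "i * int p * (int p + int q) < n * int p * int q \<longleftrightarrow> i * (int p + int q) < n * int q"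
proof -
  have "i * int p * (int p + int q) < n * int p * int q \<longleftrightarrow> (i * (int p + int q)) * int p < (n * int q) * int p"
    by (simp add: ac_simps)
  then show ?thesis using pp by simp
qed
lemma kDV: "n * int p * int q < i * int p * (int p + int q) \<longleftrightarrow> n * int q < i * (int p + int q)"
proof -
  have "n * int p * int q < i * int p * (int p + int q) \<longleftrightarrow> (n * int q) * int p < (i * (int p + int q)) * int p"
    by (simp add: ac_simps)
  then show ?thesis using pp by simp
qed
lemma kHD: "j * int q * (int p + int q) < n * int p * int q \<longleftrightarrow> j * (int p + int q) < n * int p"
proof -
  have "j * int q * (int p + int q) < n * int p * int q \<longleftrightarrow> (j * (int p + int q)) * int q < (n * int p) * int q"
    by (simp add: ac_simps)
  then show ?thesis using qq by simp
qed
lemma kDH: "n * int p * int q < j * int q * (int p + int q) \<longleftrightarrow> n * int p < j * (int p + int q)"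
proof -
  have "n * int p * int q < j * int q * (int p + int q) \<longleftrightarrow> (n * int p) * int q < (j * (int p + int q)) * int q"
    by (simp add: ac_simps)
  then show ?thesis using qq by simp
qed

lemma keyD: "key p q (D i j) = (i + j + 1) * int p * int q" by simp

lemma case1:
  assumes pq: "p < q" and ab: "a < b" "b < length (crossing_edges p q)"
    and ga: "edge_gen (crossing_edges p q ! a) = Z" and gb: "edge_gen (crossing_edges p q ! b) = Z"
    and nz: "\<forall>k. a < k \<and> k < b \<longrightarrow> edge_gen (crossing_edges p q ! k) \<noteq> Z"
  shows "map edge_gen (between (crossing_edges p q) a b) \<in> {[Y], [Y, X, Y]}"
proof -
  define es where "es = crossing_edges p q"
  have sM: "set es = MM" using ce_props unfolding es_def by simp
  have srt: "sorted_wrt (\<lambda>e e'. key p q e < key p q e') es" using ce_sorted unfolding es_def by simp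
  have ab': "a < b" "b < length es" using ab unfolding es_def by auto
  have lt: "key p q (es ! a) < key p q (es ! b)" using srt ab' by (simp add: sorted_wrt_iff_nth_less)
  have aM: "es ! a \<in> MM" "es ! b \<in> MM" using ab' sM nth_mem by (metis less_trans, metis)
  obtain i j where ea: "es ! a = V i j" using ga unfolding es_def[symmetric] by (cases "es ! a") auto
  obtain i' j' where eb: "es ! b = V i' j'" using gb unfolding es_def[symmetric] by (cases "es ! b") auto
  have va: "j * int q < i * int p" "i * int p < (j+1) * int q" using aM(1) ea meets_V[OF p0 q0] by auto
  have vb: "j' * int q < i' * int p" "i' * int p < (j'+1) * int q" using aM(2) eb meets_V[OF p0 q0] by auto
  have ia: "0 < i" "i < int q" using aM(1) ea mV by auto
  have ib: "0 < i'" "i' < int q" using aM(2) eb mV by auto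
  have ii: "i < i'" using lt ea eb kVV by simp
  define BS where "BS = {e \<in> MM. key p q (es ! a) < key p q e \<and> key p q e < key p q (es ! b)}"
  have bset: "set (between es a b) = BS" unfolding BS_def sM[symmetric]
    by (rule between_key_set[OF srt ab'])
  have bsrt: "sorted_wrt (\<lambda>e e'. key p q e < key p q e') (between es a b)" by (rule between_sorted[OF srt])
  have injB: "inj_on (key p q) (set (between es a b))"
    by (rule inj_on_subset[OF injM]) (auto simp: bset BS_def)
  have notZ: False if "e \<in> BS" "edge_gen e = Z" for e
  proof -
    have "e \<in> set (between es a b)" using that bset by simp
    then obtain k where "a < k" "k < b" "e = es ! k" using between_set[OF ab'] by auto
    then show False using nz that unfolding es_def by auto
  qed
  have i'eq: "i' = i + 1"
  proof (rule ccontr)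
    assume "i' \<noteq> i + 1"
    then have "i + 1 < i'" using ii by simp
    then obtain j2 where m2: "edge_meets p q (V (i+1) j2)" using exV[of "i+1"] ia ib by auto
    have "V (i+1) j2 \<in> BS" unfolding BS_def using m2 ea eb kVV \<open>i + 1 < i'\<close> by simp
    then show False using notZ by fastforce
  qed
  have vb': "j' * int q < (i+1) * int p" "(i+1) * int p < (j'+1) * int q" using vb i'eq by auto
  have j0: "0 \<le> j"
  proof -
    have "0 < i * int p" using ia pp by simp
    then have "0 * int q < (j+1) * int q" using va by simp
    then have "0 < j + 1" by (rule cancel_lt[OF _ qq])
    then show ?thesis by simp
  qed
  have jP: "j' < int p"
  proof -
    have "(i+1) * int p \<le> int q * int p" using ib i'eq pp by (intro mult_right_mono) auto
    then have "j' * int q < int p * int q" using vb' by (simp add: ac_simps)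
    then show ?thesis by (rule cancel_lt[OF _ qq])
  qed
  have jj1: "j \<le> j'"
  proof -
    have "i * int p < (i+1) * int p" using pp by (simp add: algebra_simps)
    then have "j * int q < (j'+1) * int q" using va vb' by linarith
    then have "j < j' + 1" by (rule cancel_lt[OF _ qq])
    then show ?thesis by simp
  qed
  have jj2: "j' \<le> j + 1"
  proof -
    have "int p < int q" using pq by simp
    then have "(i+1) * int p < (j+2) * int q" using va by (simp add: algebra_simps)
    then have "j' * int q < (j+2) * int q" using vb' by linarith
    then have "j' < j + 2" by (rule cancel_lt[OF _ qq])
    then show ?thesis by simp
  qed
  have noV: False if "V i2 j2 \<in> BS" for i2 j2
    using that unfolding BS_def using ea eb i'eq kVV by (auto simp del: edge_meets.simps)
  have Hb: "i * int p < j2 * int q \<and> j2 * int q < (i+1) * int p" if "H i2 j2 \<in> BS" for i2 j2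
    using that unfolding BS_def using ea eb i'eq kVH kHV by simp
  have Db: "i * (int p + int q) < (i2+j2+1) * int q \<and> (i2+j2+1) * int q < (i+1) * (int p + int q)"
    if "D i2 j2 \<in> BS" for i2 j2
    using that unfolding BS_def using ea eb i'eq kVD kDV by simp
  have Dlo: "i + j + 1 \<le> n" if "i * (int p + int q) < n * int q" for n
  proof -
    have "j * int q < (n - i) * int q" using that va by (simp add: algebra_simps)
    then have "j < n - i" by (rule cancel_lt[OF _ qq])
    then show ?thesis by simp
  qed
  have Dhi: "n \<le> i + j' + 1" if "n * int q < (i+1) * (int p + int q)" for n
  proof -
    have "(n - i) * int q < (j' + 2) * int q" using that vb' by (simp add: algebra_simps)
    then have "n - i < j' + 2" by (rule cancel_lt[OF _ qq])
    then show ?thesis by simp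
  qed
  have inD: "D i2 j2 \<in> BS" if "edge_meets p q (D i2 j2)"
     "i * (int p + int q) < (i2+j2+1) * int q" "(i2+j2+1) * int q < (i+1) * (int p + int q)" for i2 j2
    unfolding BS_def using that ea eb i'eq kVD kDV by simp
  show ?thesis
  proof (cases "j' = j")
    case True
    define n where "n = i + j + 1"
    have n0: "0 < n" "n < int p + int q" unfolding n_def using ia j0 jP True by auto
    obtain i0 j0 where d: "i0 + j0 + 1 = n" "edge_meets p q (D i0 j0)" using exD[OF n0] by blast
    have dB: "D i0 j0 \<in> BS"
    proof (rule inD[OF d(2)])
      show "i * (int p + int q) < (i0 + j0 + 1) * int q" unfolding d(1) n_def using va by (simp add: algebra_simps)
      show "(i0 + j0 + 1) * int q < (i + 1) * (int p + int q)" unfolding d(1) n_def using vb' True by (simp add: algebra_simps)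
    qed
    have "BS = {D i0 j0}"
    proof (rule set_eqI, rule iffI)
      fix e assume eB: "e \<in> BS"
      show "e \<in> {D i0 j0}"
      proof (cases e)
        case (H i2 j2)
        then have h: "i * int p < j2 * int q" "j2 * int q < (i+1) * int p" using Hb eB by auto
        have "j * int q < j2 * int q" "j2 * int q < (j+1) * int q" using h va vb' True by auto
        then have "j < j2" "j2 < j + 1" using cancel_lt[OF _ qq] by blast+
        then show ?thesis by simp
      next
        case (V i2 j2) then show ?thesis using noV eB by blast
      next
        case (D i2 j2)
        then have "i + j + 1 \<le> i2 + j2 + 1" "i2 + j2 + 1 \<le> i + j' + 1" using Db eB Dlo Dhi by blast+
        then have "key p q e = key p q (D i0 j0)" using D d(1) True unfolding n_def by simp
        then have "e = D i0 j0" using key_inj eB dB unfolding BS_def by blast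
        then show ?thesis by simp
      qed
    qed (use dB in simp)
    then have "set (between es a b) = set [D i0 j0]" using bset by simp
    moreover have "sorted_wrt (\<lambda>e e'. key p q e < key p q e') [D i0 j0]" by simp
    ultimately have "between es a b = [D i0 j0]" using sorted_unique[OF bsrt] injB by blast
    then show ?thesis unfolding es_def by simp
  next
    case False
    then have jj: "j' = j + 1" using jj1 jj2 by simp
    define n where "n = i + j + 1"
    have n0: "0 < n" "n < int p + int q" unfolding n_def using ia ib i'eq j0 jP jj by auto
    have n1: "0 < n + 1" "n + 1 < int p + int q" unfolding n_def using ia ib i'eq j0 jP jj by auto
    obtain i1 j1 where d1: "i1 + j1 + 1 = n" "edge_meets p q (D i1 j1)" using exD[OF n0] by blast
    obtain i3 j3 where d2: "i3 + j3 + 1 = n + 1" "edge_meets p q (D i3 j3)" using exD[OF n1] by blast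
    obtain ih where h: "edge_meets p q (H ih (j+1))" using exH[of "j+1"] j0 jP jj by auto
    have d1B: "D i1 j1 \<in> BS"
    proof (rule inD[OF d1(2)])
      show "i * (int p + int q) < (i1 + j1 + 1) * int q" unfolding d1(1) n_def using va by (simp add: algebra_simps)
      show "(i1 + j1 + 1) * int q < (i + 1) * (int p + int q)" unfolding d1(1) n_def using vb' jj by (simp add: algebra_simps)
    qed
    have d2B: "D i3 j3 \<in> BS"
    proof (rule inD[OF d2(2)])
      show "i * (int p + int q) < (i3 + j3 + 1) * int q" unfolding d2(1) n_def using va by (simp add: algebra_simps)
      show "(i3 + j3 + 1) * int q < (i + 1) * (int p + int q)" unfolding d2(1) n_def using vb' jj by (simp add: algebra_simps)
    qed
    have hB: "H ih (j+1) \<in> BS" unfolding BS_def using h ea eb i'eq kVH kHV va vb' jj by simp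
    have k1: "key p q (D i1 j1) < key p q (H ih (j+1))"
      using d1(1) va unfolding keyD key.simps kDH n_def by (simp add: algebra_simps)
    have k2: "key p q (H ih (j+1)) < key p q (D i3 j3)"
      using d2(1) vb' jj unfolding keyD key.simps kHD n_def by (simp add: algebra_simps)
    have "BS = {D i1 j1, H ih (j+1), D i3 j3}"
    proof (rule set_eqI, rule iffI)
      fix e assume eB: "e \<in> BS"
      show "e \<in> {D i1 j1, H ih (j+1), D i3 j3}"
      proof (cases e)
        case (H i2 j2)
        then have hh: "i * int p < j2 * int q" "j2 * int q < (i+1) * int p" using Hb eB by auto
        have "(i+1) * int p < (j+2) * int q" using vb' jj by (simp add: algebra_simps)
        then have "j * int q < j2 * int q" "j2 * int q < (j+2) * int q" using hh va by linarith+
        then have "j < j2" "j2 < j + 2" using cancel_lt[OF _ qq] by blast+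
        then have "j2 = j + 1" by simp
        then have "key p q e = key p q (H ih (j+1))" using H by simp
        then have "e = H ih (j+1)" using key_inj eB hB unfolding BS_def by blast
        then show ?thesis by simp
      next
        case (V i2 j2) then show ?thesis using noV eB by blast
      next
        case (D i2 j2)
        then have "i + j + 1 \<le> i2 + j2 + 1" "i2 + j2 + 1 \<le> i + j' + 1" using Db eB Dlo Dhi by blast+
        then have "i2 + j2 + 1 = n \<or> i2 + j2 + 1 = n + 1" unfolding n_def using jj by auto
        then have "key p q e = key p q (D i1 j1) \<or> key p q e = key p q (D i3 j3)" using D d1(1) d2(1) by auto
        then have "e = D i1 j1 \<or> e = D i3 j3" using key_inj eB d1B d2B unfolding BS_def by blast
        then show ?thesis by auto
      qed
    qed (use d1B d2B hB in auto)
    moreover have "sorted_wrt (\<lambda>e e'. key p q e < key p q e') [D i1 j1, H ih (j+1), D i3 j3]"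
      using k1 k2 by simp
    ultimately have "between es a b = [D i1 j1, H ih (j+1), D i3 j3]"
      using sorted_unique[OF bsrt] injB bset by simp
    then show ?thesis unfolding es_def by simp
  qed
qed


lemma Pr_unique:
  assumes "distinct es1 \<and> set es1 = MM \<and> sorted (map (edge_param p q) es1)"
    "distinct es2 \<and> set es2 = MM \<and> sorted (map (edge_param p q) es2)"
  shows "es1 = es2"
proof -
  have "set es1 = MM" "map (key p q) es1 = LL" "set es2 = MM" "map (key p q) es2 = LL"
    using assms Pr_iff by blast+
  then show ?thesis using injM inj_on_map_eq_map[of "key p q" es1 es2] by simp
qed

lemma ce_Pr: "distinct (crossing_edges p q) \<and> set (crossing_edges p q) = MM \<and> sorted (map (edge_param p q) (crossing_edges p q))"
  using ce_props Pr_iff by blast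

lemma case1G:
  assumes pq: "p < q" and ab: "a < b" "b < length (map edge_gen (crossing_edges p q))"
    and ga: "map edge_gen (crossing_edges p q) ! a = Z" and gb: "map edge_gen (crossing_edges p q) ! b = Z"
    and nz: "\<forall>k. a < k \<and> k < b \<longrightarrow> map edge_gen (crossing_edges p q) ! k \<noteq> Z"
  shows "between (map edge_gen (crossing_edges p q)) a b \<in> {[Y], [Y, X, Y]}"
proof -
  have "map edge_gen (between (crossing_edges p q) a b) \<in> {[Y], [Y, X, Y]}"
    using case1[OF pq] ab ga gb nz by auto
  then show ?thesis unfolding between_def by (simp add: take_map drop_map)
qed

end

fun sw :: "edge \<Rightarrow> edge" where
  "sw (H i j) = V j i" | "sw (V i j) = H j i" | "sw (D i j) = D j i"

fun swg :: "gen \<Rightarrow> gen" where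
  "swg X = Z" | "swg Z = X" | "swg Y = Y"

lemma sw_sw[simp]: "sw (sw e) = e" by (cases e) auto
lemma gen_sw: "edge_gen (sw e) = swg (edge_gen e)" by (cases e) auto

lemma meets_sw: assumes "0 < p" "0 < q" shows "edge_meets q p (sw e) \<longleftrightarrow> edge_meets p q e"
proof (cases e)
  case (H i j) then show ?thesis by (simp only: sw.simps meets_H[OF assms] meets_V[OF assms(2,1)])
next
  case (V i j) then show ?thesis by (simp only: sw.simps meets_V[OF assms] meets_H[OF assms(2,1)])
next
  case (D i j)
  show ?thesis unfolding D sw.simps meets_D[OF assms] meets_D[OF assms(2,1)]
    by (simp only: add.commute[of j i] add.commute[of "int q" "int p"]) blast
qed

lemma param_sw: "edge_param q p (sw e) = edge_param p q e"
proof (cases e)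
  case (D i j)
  show ?thesis unfolding D by (simp add: add_ac)
qed simp_all

lemma ce_sw: assumes "0 < p" "0 < q" "coprime p q"
  shows "crossing_edges q p = map sw (crossing_edges p q)"
proof -
  have c2: "coprime q p" using assms(3) by (simp add: coprime_commute)
  define es where "es = crossing_edges p q"
  have P1: "distinct es \<and> set es = {e. edge_meets p q e} \<and> sorted (map (edge_param p q) es)"
    using ce_Pr[OF assms] unfolding es_def .
  have "inj sw" by (metis injI sw_sw)
  then have "inj_on sw (set es)" by (metis inj_on_subset subset_UNIV)
  then have "distinct (map sw es)" using P1 by (simp add: distinct_map)
  moreover have "set (map sw es) = {e. edge_meets q p e}"
  proof (rule set_eqI)
    fix e
    have "e \<in> sw ` set es \<longleftrightarrow> sw e \<in> set es" by (metis image_iff sw_sw)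
    then show "e \<in> set (map sw es) \<longleftrightarrow> e \<in> {e. edge_meets q p e}"
      using P1 meets_sw[OF assms(2,1), of e] by simp
  qed
  moreover have "sorted (map (edge_param q p) (map sw es))" using P1 by (simp add: comp_def param_sw)
  ultimately show ?thesis using Pr_unique[OF assms(2,1) c2 ce_Pr[OF assms(2,1) c2]] unfolding es_def by blast
qed

lemma between_map: "between (map f w) a b = map f (between w a b)"
  unfolding between_def by (simp add: take_map drop_map)

lemma fst_omega: "map fst (omega p q) = map edge_gen (crossing_edges p q)"
  by (simp add: omega_def edge_letter_def comp_def)

lemma omega_fst_nth: "k < length (omega p q) \<Longrightarrow> fst (omega p q ! k) = map edge_gen (crossing_edges p q) ! k"
  by (metis fst_omega nth_map)

theorem lemma4p6:
  fixes p q :: nat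
  assumes "0 < p" and "0 < q" and "coprime p q"
  shows "(p < q \<longrightarrow>
           (\<forall>a b. a < b \<and> b < length (omega p q)
              \<and> fst (omega p q ! a) = Z \<and> fst (omega p q ! b) = Z
              \<and> (\<forall>k. a < k \<and> k < b \<longrightarrow> fst (omega p q ! k) \<noteq> Z)
              \<longrightarrow> map fst (between (omega p q) a b) \<in> {[Y], [Y, X, Y]}))
       \<and> (q < p \<longrightarrow>
           (\<forall>a b. a < b \<and> b < length (omega p q)
              \<and> fst (omega p q ! a) = X \<and> fst (omega p q ! b) = X
              \<and> (\<forall>k. a < k \<and> k < b \<longrightarrow> fst (omega p q ! k) \<noteq> X)
              \<longrightarrow> map fst (between (omega p q) a b) \<in> {[Y], [Y, Z, Y]}))"
proof (intro conjI impI allI)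
  fix a b
  assume pq: "p < q" and h: "a < b \<and> b < length (omega p q)
              \<and> fst (omega p q ! a) = Z \<and> fst (omega p q ! b) = Z
              \<and> (\<forall>k. a < k \<and> k < b \<longrightarrow> fst (omega p q ! k) \<noteq> Z)"
  define G where "G = map edge_gen (crossing_edges p q)"
  have len: "length G = length (omega p q)" unfolding G_def by (metis fst_omega length_map)
  have nth: "G ! k = fst (omega p q ! k)" if "k < length (omega p q)" for k
    using omega_fst_nth[OF that] unfolding G_def by simp
  have c: "a < b" "b < length G" "G ! a = Z" "G ! b = Z" using h len nth by auto
  have d: "\<forall>k. a < k \<and> k < b \<longrightarrow> G ! k \<noteq> Z"
  proof (intro allI impI)
    fix k assume "a < k \<and> k < b"
    then show "G ! k \<noteq> Z" using h nth[of k] by auto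
  qed
  have "between G a b \<in> {[Y], [Y, X, Y]}" by (rule case1G[OF assms pq, folded G_def]) (use c d in auto)
  then show "map fst (between (omega p q) a b) \<in> {[Y], [Y, X, Y]}"
    unfolding between_map[symmetric] fst_omega G_def .
next
  fix a b
  assume pq: "q < p" and h: "a < b \<and> b < length (omega p q)
              \<and> fst (omega p q ! a) = X \<and> fst (omega p q ! b) = X
              \<and> (\<forall>k. a < k \<and> k < b \<longrightarrow> fst (omega p q ! k) \<noteq> X)"
  have c2: "coprime q p" using assms(3) by (simp add: coprime_commute)
  define G' where "G' = map edge_gen (crossing_edges q p)"
  have GG: "map edge_gen (crossing_edges p q) = map swg G'"
    unfolding G'_def ce_sw[OF assms(2,1) c2] by (simp add: comp_def gen_sw)
  have len: "length G' = length (omega p q)" unfolding G'_def by (metis fst_omega length_map GG G'_def)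
  have fo: "fst (omega p q ! k) = swg (G' ! k)" if "k < length (omega p q)" for k
    using omega_fst_nth[OF that] GG len that by simp
  have sX: "swg g = X \<longleftrightarrow> g = Z" for g by (cases g) auto
  have c: "a < b" "b < length G'" "G' ! a = Z" "G' ! b = Z" using h len fo sX by auto
  have d: "\<forall>k. a < k \<and> k < b \<longrightarrow> G' ! k \<noteq> Z"
  proof (intro allI impI)
    fix k assume "a < k \<and> k < b"
    then show "G' ! k \<noteq> Z" using h fo[of k] sX by auto
  qed
  have "between G' a b \<in> {[Y], [Y, X, Y]}" by (rule case1G[OF assms(2,1) c2 pq, folded G'_def]) (use c d in auto)
  then have "map swg (between G' a b) \<in> {[Y], [Y, Z, Y]}" by auto
  then show "map fst (between (omega p q) a b) \<in> {[Y], [Y, Z, Y]}"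
    unfolding between_map[symmetric] fst_omega GG .
qed

end
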